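(* Assume (A1) and (A2). Let $t_0\le t_1$ and $B>0$ be such that: (1) the sets $\mathcal{U}^{(t)}_{\pm y,\pm}$ and $\mathcal{V}^{(t)}_{\pm y,\pm}$ do not depend on $t\in[t_0,t_1]$; (2) $\max_{r}\langle\mathbf{w}^{(t)}_{y,r},y\mathbf{u}\rangle<B(\beta^*_{\mathbf{u}}m)^{1/2}$ for all $t\in[t_0,t_1]$; (3) $\min_r\langle\mathbf{w}^{(t)}_{-y,r},-y\mathbf{u}\rangle>-0.1$ and $\min_r\langle\mathbf{w}^{(t)}_{-y,r},-y\mathbf{v}\rangle>-0.1$ for all $t\in[t_0,t_1]$; (4) $\frac1m\sum_r\sigma(\langle\mathbf{w}^{(t)}_{y,r},y\mathbf{v}\rangle)<\delta$ for all $t\in[t_0,t_1]$; (5) $-2\le1-yf(\mathbf{x};\mathbf{W}^{(t)})\le1$ for all $t\in[t_0,t_1]$. Then, with $\epsilon=(\delta-\delta(1.05-\delta)^{1/2})/4$, $$\sum_{s=t_0}^{t_1-1}\big(1-yf(\mathbf{x};\mathbf{W}^{(s)})\big)\ge2\epsilon(t_1-t_0)-\frac{mB}{\eta\|\mathbf{u}\|_2^2\sqrt{1.05-\delta}},$$ and for every $r$ with $\langle\mathbf{w}^{(t_0)}_{y,r},y\mathbf{v}\rangle>0$, $$\langle\mathbf{w}^{(t_1)}_{y,r},y\mathbf{v}\rangle\ge\langle\mathbf{w}^{(t_0)}_{y,r},y\mathbf{v}\rangle\exp\Big\{\frac{\eta\|\mathbf{v}\|_2^2\epsilon}{m}(t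_1-t_0)-\frac{\|\mathbf{v}\|_2^2}{\|\mathbf{u}\|_2^2}\cdot\frac{B}{(1.05-\delta)^{1/2}}\Big\}.$$
   Context: Single-data setting: $\mathbf{u},\mathbf{v}\in\mathbb{R}^d$ are fixed nonzero vectors with $\langle\mathbf{u},\mathbf{v}\rangle=0$, $y\in\{\pm1\}$, and the single training example is $(\mathbf{x},y)$ with $\mathbf{x}=(y\mathbf{u},y\mathbf{v})$. Let $\sigma(z)=(\max\{z,0\})^2$ (so $\sigma'(z)=2\max\{z,0\}$). Weights $\mathbf{W}=\{\mathbf{w}_{j,r}\}_{j\in\{\pm1\},r\in[m]}\subset\mathbb{R}^d$; network $f(\mathbf{x};\mathbf{W})=\sum_{j\in\{\pm1\}}jF_j(\mathbf{x};\mathbf{W})$ with $F_j(\mathbf{x};\mathbf{W})=\frac1m\sum_{r\in[m]}[\sigma(\langle\mathbf{w}_{j,r},y\mathbf{u}\rangle)+\sigma(\langle\mathbf{w}_{j,r},y\mathbf{v}\rangle)]$; loss $L(\mathbf{W})=\frac12(f(\mathbf{x};\mathbf{W})-y)^2$. All entries of all $\mathbf{w}^{(0)}_{j,r}$ are i.i.d. $N(0,\sigma_0^2)$, and for $t\ge0$: $\mathbf{w}^{(t+1)}_{j,r}=\mathbf{w}^{(t)}_{j,r}-\frac{\eta j}{m}(f(\mathbf{x};\mathbf{W}^{(t)})-y)\big(\sigma'(\langle\mathbf{w}^{(t)}_{j,r},y\mathbf{u}\rangle)y\mathbf{u}+\sigma'(\langle\mathbf{w}^{(t)}_{j,r},y\mathbf{v}\rangle)y\mathbf{v}\big)$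 with learning rate $\eta>0$. (A1) Conditions: $m/(4\|\mathbf{u}\|_2^2)\le\eta\le2m/(5\|\mathbf{u}\|_2^2)$; $\sigma_0=\tilde\Theta(\max\{\|\mathbf{u}\|_2,\|\mathbf{v}\|_2\}^{-1}d^{-1/2})$; $\|\mathbf{v}\|_2<0.01\|\mathbf{u}\|_2$; $d=\Omega(\mathrm{polylog}(m))$. (A2) Oscillation: there is a constant $\delta\in(0.2,0.8)$ with $|yf(\mathbf{x};\mathbf{W}^{(t)})-1|\ge\delta$ for every $t\ge0$. Neuron sets: for $j\in\{\pm1\}$, $\mathcal{U}^{(t)}_{j,+}=\{r\in[m]:\langle\mathbf{w}^{(t)}_{j,r},j\mathbf{u}\rangle>0\}$, $\mathcal{U}^{(t)}_{j,-}=[m]\setminus\mathcal{U}^{(t)}_{j,+}$; $\mathcal{V}^{(t)}_{j,\pm}$ likewise with $\mathbf{v}$. Here $\beta^*_{\mathbf{u}}=\max_{r}\sigma(\langle\mathbf{w}^{(t_0)}_{y,r},y\mathbf{u}\rangle)/\sum_{r}\sigma(\langle\mathbf{w}^{(t_0)}_{y,r},y\mathbf{u}\rangle)$ (assumed well defined). *)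

theory Defs
  imports "HOL-Analysis.Analysis"
begin

definition act :: "real \<Rightarrow> real" where
  "act z = (max z 0)\<^sup>2"

definition act' :: "real \<Rightarrow> real" where
  "act' z = 2 * max z 0"

(* Weights: W j r for j \<in> {1,-1} (encoded as a real) and neuron index r \<in> {0..<m}
   (the paper's [m], re-indexed from 0). *)
type_synonym 'd weights = "real \<Rightarrow> nat \<Rightarrow> real ^ 'd"

(* F_j(x;W) for the input x = (p, q) with p = y u, q = y v. *)
definition netF :: "nat \<Rightarrow> 'd weights \<Rightarrow> real \<Rightarrow> real^'d \<Rightarrow> real^'d \<Rightarrow> real" where
  "netF m W j p q = (1 / real m) * (\<Sum>r<m. act (W j r \<bullet> p) + act (W j r \<bullet> q))"

definition netf :: "nat \<Rightarrow> 'd weights \<Rightarrow> real^'d \<Rightarrow> real^'d \<Rightarrow> real" where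
  "netf m W p q = netF m W 1 p q - netF m W (-1) p q"

(* One gradient-descent step on L(W) = (f(x;W) - y)^2 / 2 with x = (y u, y v). *)
definition gd_step :: "nat \<Rightarrow> real \<Rightarrow> real \<Rightarrow> real^'d \<Rightarrow> real^'d \<Rightarrow> 'd weights \<Rightarrow> 'd weights" where
  "gd_step m \<eta> y u v W = (\<lambda>j r. W j r - ((\<eta> * j / real m) * (netf m W (y *\<^sub>R u) (y *\<^sub>R v) - y)) *\<^sub>R
        (act' (W j r \<bullet> (y *\<^sub>R u)) *\<^sub>R (y *\<^sub>R u) + act' (W j r \<bullet> (y *\<^sub>R v)) *\<^sub>R (y *\<^sub>R v)))"

definition traj :: "nat \<Rightarrow> real \<Rightarrow> real \<Rightarrow> real^'d \<Rightarrow> real^'d \<Rightarrow> 'd weights \<Rightarrow> nat \<Rightarrow> 'd weights" where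
  "traj m \<eta> y u v W0 t = ((gd_step m \<eta> y u v) ^^ t) W0"

(* Neuron set {r \<in> [m] : <w_{j,r}, j a> > 0}; with a = u gives U_{j,+}, with a = v gives V_{j,+}.
   The "-" sets are the complements in [m]. *)
definition posset :: "nat \<Rightarrow> 'd weights \<Rightarrow> real \<Rightarrow> real^'d \<Rightarrow> nat set" where
  "posset m W j a = {r. r < m \<and> W j r \<bullet> (j *\<^sub>R a) > 0}"

definition negset :: "nat \<Rightarrow> 'd weights \<Rightarrow> real \<Rightarrow> real^'d \<Rightarrow> nat set" where
  "negset m W j a = {..<m} - posset m W j a"

definition beta_star :: "nat \<Rightarrow> 'd weights \<Rightarrow> real \<Rightarrow> real^'d \<Rightarrow> real" where
  "beta_star m W y u = Max ((\<lambda>r. act (W y r \<bullet> (y *\<^sub>R u))) ` {..<m}) /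
                        (\<Sum>r<m. act (W y r \<bullet> (y *\<^sub>R u)))"

end

theory Submission
  imports Defs
begin


lemma inner_gd:
  "gd_step m \<eta> y u v W j r \<bullet> z = W j r \<bullet> z - ((\<eta> * j / real m) * (netf m W (y *\<^sub>R u) (y *\<^sub>R v) - y)) *
     (act' (W j r \<bullet> (y *\<^sub>R u)) * ((y *\<^sub>R u) \<bullet> z) + act' (W j r \<bullet> (y *\<^sub>R v)) * ((y *\<^sub>R v) \<bullet> z))"
  unfolding gd_step_def by (simp add: inner_diff_left inner_add_left)

lemma step_u:
  assumes y: "y = 1 \<or> y = -1" and uv: "u \<bullet> v = 0"
  shows "gd_step m \<eta> y u v W y r \<bullet> (y *\<^sub>R u) = W y r \<bullet> (y *\<^sub>R u)
     + (2*\<eta>*(norm u)\<^sup>2/real m) * (1 - y * netf m W (y *\<^sub>R u) (y *\<^sub>R v)) * max (W y r \<bullet> (y *\<^sub>R u)) 0"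
  using y uv unfolding inner_gd act'_def
  by (auto simp: power2_norm_eq_inner inner_commute algebra_simps)

lemma step_v:
  assumes y: "y = 1 \<or> y = -1" and uv: "u \<bullet> v = 0"
  shows "gd_step m \<eta> y u v W y r \<bullet> (y *\<^sub>R v) = W y r \<bullet> (y *\<^sub>R v)
     + (2*\<eta>*(norm v)\<^sup>2/real m) * (1 - y * netf m W (y *\<^sub>R u) (y *\<^sub>R v)) * max (W y r \<bullet> (y *\<^sub>R v)) 0"
  using y uv unfolding inner_gd act'_def
  by (auto simp: power2_norm_eq_inner inner_commute algebra_simps)

lemma ynetf:
  assumes y: "y = 1 \<or> y = -1"
  shows "y * netf m W p q = netF m W y p q - netF m W (-y) p q"
  using y unfolding netf_def by auto

lemma netF_split: "netF m W j p q = (1/real m) * (\<Sum>r<m. act (W j r \<bullet> p)) + (1/real m) * (\<Sum>r<m. act (W j r \<bullet> q))"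
  unfolding netF_def by (simp add: sum.distrib algebra_simps)

lemma act_nonneg: "act z \<ge> 0" unfolding act_def by simp

lemma act_pos: "z > 0 \<Longrightarrow> act z = z^2" unfolding act_def by simp
lemma act_nonpos: "z \<le> 0 \<Longrightarrow> act z = 0" unfolding act_def by simp

lemma act_small: assumes "z < 0.1" shows "act z < 0.01"
proof (cases "z > 0")
  case True
  have "z * z < 0.1 * 0.1" using True assms by (intro mult_strict_mono) auto
  thus ?thesis using act_pos[OF True] by (simp add: power2_eq_square)
next
  case False thus ?thesis using act_nonpos[of z] by simp
qed

lemma mono_act: "mono act" unfolding act_def mono_def
  by (auto intro!: power_mono)


lemma lin_helper: "(x::real) \<le> y \<Longrightarrow> z \<le> w \<Longrightarrow> L - R = (y - x) + (w - z) \<Longrightarrow> R \<le> L" by linarith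

theorem mainTheorem10:
  fixes u v :: "real ^ 'd" and y \<eta> \<delta> B :: real and m t0 t1 :: nat and W0 :: "'d weights"
  defines "W \<equiv> traj m \<eta> y u v W0"
  defines "\<epsilon> \<equiv> (\<delta> - \<delta> * sqrt (1.05 - \<delta>)) / 4"
  assumes y: "y = 1 \<or> y = -1"
    and uv: "u \<noteq> 0" "v \<noteq> 0" "u \<bullet> v = 0"
    and m: "m > 0"
    and eta: "real m / (4 * (norm u)\<^sup>2) \<le> \<eta>" "\<eta> \<le> 2 * real m / (5 * (norm u)\<^sup>2)"
    and vsmall: "norm v < 0.01 * norm u"
    and delta: "0.2 < \<delta>" "\<delta> < 0.8"
    and osc: "\<forall>t. \<bar>y * netf m (W t) (y *\<^sub>R u) (y *\<^sub>R v) - 1\<bar> \<ge> \<delta>"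
    and beta_wd: "(\<Sum>r<m. act (W t0 y r \<bullet> (y *\<^sub>R u))) \<noteq> 0"
    and t01: "t0 \<le> t1"
    and B: "B > 0"
    and c1: "\<forall>t\<in>{t0..t1}. \<forall>j\<in>{y, -y}.
               posset m (W t) j u = posset m (W t0) j u \<and> negset m (W t) j u = negset m (W t0) j u \<and>
               posset m (W t) j v = posset m (W t0) j v \<and> negset m (W t) j v = negset m (W t0) j v"
    and c2: "\<forall>t\<in>{t0..t1}. Max ((\<lambda>r. W t y r \<bullet> (y *\<^sub>R u)) ` {..<m})
                 < B * sqrt (beta_star m (W t0) y u * real m)"
    and c3: "\<forall>t\<in>{t0..t1}. Min ((\<lambda>r. W t (-y) r \<bullet> ((-y) *\<^sub>R u)) ` {..<m}) > -0.1
                 \<and> Min ((\<lambda>r. W t (-y) r \<bullet> ((-y) *\<^sub>R v)) ` {..<m}) > -0.1"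
    and c4: "\<forall>t\<in>{t0..t1}. (1 / real m) * (\<Sum>r<m. act (W t y r \<bullet> (y *\<^sub>R v))) < \<delta>"
    and c5: "\<forall>t\<in>{t0..t1}. -2 \<le> 1 - y * netf m (W t) (y *\<^sub>R u) (y *\<^sub>R v)
                 \<and> 1 - y * netf m (W t) (y *\<^sub>R u) (y *\<^sub>R v) \<le> 1"
  shows "(\<Sum>s\<in>{t0..<t1}. 1 - y * netf m (W s) (y *\<^sub>R u) (y *\<^sub>R v))
            \<ge> 2 * \<epsilon> * real (t1 - t0) - real m * B / (\<eta> * (norm u)\<^sup>2 * sqrt (1.05 - \<delta>))
         \<and> (\<forall>r<m. W t0 y r \<bullet> (y *\<^sub>R v) > 0 \<longrightarrow>
               W t1 y r \<bullet> (y *\<^sub>R v) \<ge> W t0 y r \<bullet> (y *\<^sub>R v) *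
                 exp (\<eta> * (norm v)\<^sup>2 * \<epsilon> / real m * real (t1 - t0)
                      - (norm v)\<^sup>2 / (norm u)\<^sup>2 * (B / sqrt (1.05 - \<delta>))))"
proof -
  define p where "p = y *\<^sub>R u"
  define q where "q = y *\<^sub>R v"
  define lo where "lo s = 1 - y * netf m (W s) p q" for s
  define kk where "kk = 2*\<eta>*(norm u)\<^sup>2/real m"
  define kv where "kv = 2*\<eta>*(norm v)\<^sup>2/real m"
  define A where "A s = (1/real m) * (\<Sum>r<m. act (W s y r \<bullet> p))" for s
  define Bv where "Bv s = (1/real m) * (\<Sum>r<m. act (W s y r \<bullet> q))" for s
  define N where "N s = netF m (W s) (-y) p q" for s
  define g where "g s = sqrt (A s)" for s
  define c where "c = sqrt (1.05 - \<delta>)"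
  define a where "a = (3 - c)/2"
  define T where "T = real (t1 - t0)"
  have Wsuc: "W (Suc s) = gd_step m \<eta> y u v (W s)" for s
    unfolding W_def traj_def by simp
  have nu: "norm u > 0" using uv by simp
  have nv: "norm v > 0" using uv by simp
  have mpos: "real m > 0" using m by simp
  have e1: "\<eta> * (norm u)\<^sup>2 \<ge> real m / 4"
    using eta(1) nu by (simp add: divide_le_eq mult.commute)
  have e2: "\<eta> * (norm u)\<^sup>2 \<le> 2 * real m / 5"
    using eta(2) nu by (simp add: le_divide_eq mult.commute)
  have k1: "kk \<ge> 1/2" using e1 mpos unfolding kk_def by (simp add: le_divide_eq)
  have k2: "kk \<le> 4/5" using e2 mpos unfolding kk_def by (simp add: divide_le_eq)
  have etapos: "\<eta> > 0"
  proof -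
    have "\<eta> * (norm u)\<^sup>2 > 0" using e1 mpos by linarith
    thus ?thesis using nu by (simp add: zero_less_mult_iff)
  qed
  have kvk: "kv = kk * ((norm v)\<^sup>2/(norm u)\<^sup>2)"
    unfolding kk_def kv_def using nu by (simp add: field_simps)
  have vu2: "(norm v)\<^sup>2 \<le> (norm u)\<^sup>2 / 10000"
  proof -
    have "(norm v)\<^sup>2 \<le> (0.01 * norm u)\<^sup>2" using vsmall nv by (intro power_mono) auto
    thus ?thesis by (simp add: power2_eq_square)
  qed
  have kvpos: "kv > 0" unfolding kv_def using etapos nv mpos by simp
  have kvsmall: "kv \<le> 1/12500"
  proof -
    have "(norm v)\<^sup>2/(norm u)\<^sup>2 \<le> 1/10000" using vu2 nu by (simp add: divide_le_eq)
    hence "kv \<le> kk * (1/10000)" unfolding kvk using k1 by (intro mult_left_mono) auto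
    thus ?thesis using k2 by simp
  qed
  have c2a: "c\<^sup>2 = 1.05 - \<delta>" unfolding c_def using delta by simp
  have cpos: "c > 0" unfolding c_def using delta by simp
  have cle: "c < 0.93"
  proof -
    have "sqrt (1.05 - \<delta>) < sqrt (0.93\<^sup>2)" using delta by (intro real_sqrt_less_mono) (simp add: power2_eq_square)
    thus ?thesis unfolding c_def by simp
  qed
  have eps_eq: "\<epsilon> = \<delta>*(1-c)/4" unfolding \<epsilon>_def c_def by (simp add: algebra_simps)
  have apos: "a > 0" unfolding a_def using cle by simp
  have ac1: "a * c \<le> 1"
  proof -
    have "(c - 1) * (c - 2) \<ge> 0" using cle by (intro mult_nonpos_nonpos) auto
    thus ?thesis unfolding a_def by (simp add: algebra_simps power2_eq_square)
  qed
  have yn: "y * netf m (W s) p q = A s + Bv s - N s" for s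
    using ynetf[OF y, of m "W s" p q] netF_split[of m "W s" y p q]
    unfolding A_def Bv_def N_def by simp
  have Nnn: "N s \<ge> 0" for s
  proof -
    have "0 \<le> (\<Sum>r<m. act (W s (-y) r \<bullet> p) + act (W s (-y) r \<bullet> q))"
      by (intro sum_nonneg add_nonneg_nonneg act_nonneg)
    thus ?thesis unfolding N_def netF_def using mpos by simp
  qed
  have Nsmall: "N s \<le> 0.02" if s: "s \<in> {t0..t1}" for s
  proof -
    have fin: "finite ((\<lambda>r. W s (-y) r \<bullet> ((-y) *\<^sub>R u)) ` {..<m})" "finite ((\<lambda>r. W s (-y) r \<bullet> ((-y) *\<^sub>R v)) ` {..<m})" by auto
    have b1: "act (W s (-y) r \<bullet> p) \<le> 0.01" if r: "r < m" for r
    proof -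
      have "Min ((\<lambda>r. W s (-y) r \<bullet> ((-y) *\<^sub>R u)) ` {..<m}) \<le> W s (-y) r \<bullet> ((-y) *\<^sub>R u)"
        using r by (intro Min_le) auto
      moreover have "Min ((\<lambda>r. W s (-y) r \<bullet> ((-y) *\<^sub>R u)) ` {..<m}) > -0.1" using c3 s by blast
      ultimately have "W s (-y) r \<bullet> ((-y) *\<^sub>R u) > -0.1" by linarith
      hence "W s (-y) r \<bullet> p < 0.1" unfolding p_def by (simp add: inner_scaleR_right)
      thus ?thesis using act_small by (simp add: less_imp_le)
    qed
    have b2: "act (W s (-y) r \<bullet> q) \<le> 0.01" if r: "r < m" for r
    proof -
      have "Min ((\<lambda>r. W s (-y) r \<bullet> ((-y) *\<^sub>R v)) ` {..<m}) \<le> W s (-y) r \<bullet> ((-y) *\<^sub>R v)"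
        using r by (intro Min_le) auto
      moreover have "Min ((\<lambda>r. W s (-y) r \<bullet> ((-y) *\<^sub>R v)) ` {..<m}) > -0.1" using c3 s by blast
      ultimately have "W s (-y) r \<bullet> ((-y) *\<^sub>R v) > -0.1" by linarith
      hence "W s (-y) r \<bullet> q < 0.1" unfolding q_def by (simp add: inner_scaleR_right)
      thus ?thesis using act_small by (simp add: less_imp_le)
    qed
    have "(\<Sum>r<m. act (W s (-y) r \<bullet> p) + act (W s (-y) r \<bullet> q)) \<le> (\<Sum>r<m. 0.02)"
      proof (intro sum_mono)
      fix r assume "r \<in> {..<m}"
      hence "act (W s (-y) r \<bullet> p) \<le> 0.01" "act (W s (-y) r \<bullet> q) \<le> 0.01" using b1 b2 by auto
      thus "act (W s (-y) r \<bullet> p) + act (W s (-y) r \<bullet> q) \<le> 0.02" by simp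
    qed
    hence "(\<Sum>r<m. act (W s (-y) r \<bullet> p) + act (W s (-y) r \<bullet> q)) \<le> real m * 0.02" by simp
    thus ?thesis unfolding N_def netF_def using mpos by (simp add: divide_le_eq mult.commute)
  qed
  have Bvnn: "Bv s \<ge> 0" for s
    proof -
    have "0 \<le> (\<Sum>r<m. act (W s y r \<bullet> q))" by (intro sum_nonneg act_nonneg)
    thus ?thesis unfolding Bv_def using mpos by simp
  qed
  have Ann: "A s \<ge> 0" for s
    proof -
    have "0 \<le> (\<Sum>r<m. act (W s y r \<bullet> p))" by (intro sum_nonneg act_nonneg)
    thus ?thesis unfolding A_def using mpos by simp
  qed
  have Bvsmall: "Bv s < \<delta>" if "s \<in> {t0..t1}" for s
    using c4 that unfolding Bv_def q_def by auto
  have stepu: "W (Suc s) y r \<bullet> p = W s y r \<bullet> p + kk * lo s * max (W s y r \<bullet> p) 0" for s r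
    using step_u[OF y uv(3), of m \<eta> "W s" r] unfolding Wsuc p_def q_def kk_def lo_def by simp
  have stepv: "W (Suc s) y r \<bullet> q = W s y r \<bullet> q + kv * lo s * max (W s y r \<bullet> q) 0" for s r
    using step_v[OF y uv(3), of m \<eta> "W s" r] unfolding Wsuc p_def q_def kv_def lo_def by simp
  have c1y: "posset m (W s) y u = posset m (W t0) y u \<and> posset m (W s) y v = posset m (W t0) y v"
    if "s \<in> {t0..t1}" for s
  proof -
    have "\<forall>j\<in>{y, -y}. posset m (W s) j u = posset m (W t0) j u \<and> negset m (W s) j u = negset m (W t0) j u \<and>
               posset m (W s) j v = posset m (W t0) j v \<and> negset m (W s) j v = negset m (W t0) j v"
      using c1 that by (rule bspec)
    hence "posset m (W s) y u = posset m (W t0) y u \<and> negset m (W s) y u = negset m (W t0) y u \<and>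
               posset m (W s) y v = posset m (W t0) y v \<and> negset m (W s) y v = negset m (W t0) y v"
      by (rule bspec) simp
    thus ?thesis by (simp only:)
  qed
  obtain r0 where r0: "r0 < m" "W t0 y r0 \<bullet> p > 0"
  proof -
    have "\<exists>r\<in>{..<m}. act (W t0 y r \<bullet> p) \<noteq> 0"
      using beta_wd unfolding p_def by (meson sum.neutral)
    then obtain r where "r < m" "act (W t0 y r \<bullet> p) \<noteq> 0" by auto
    moreover have "W t0 y r \<bullet> p > 0"
    proof (rule ccontr)
      assume "\<not> W t0 y r \<bullet> p > 0"
      hence "act (W t0 y r \<bullet> p) = 0" by (intro act_nonpos) simp
      thus False using \<open>act (W t0 y r \<bullet> p) \<noteq> 0\<close> by simp
    qed
    ultimately show ?thesis using that by blast
  qed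
  have pos_r0: "W s y r0 \<bullet> p > 0" if "s \<in> {t0..t1}" for s
  proof -
    have "r0 \<in> posset m (W t0) y u" using r0 unfolding posset_def p_def by auto
    moreover have "posset m (W s) y u = posset m (W t0) y u" using c1y[OF that] by (rule conjunct1)
    ultimately show ?thesis unfolding posset_def p_def by auto
  qed
  have fac_pos: "1 + kk * lo s > 0" if s: "s \<in> {t0..<t1}" for s
  proof -
    have z: "W s y r0 \<bullet> p > 0" using pos_r0 s by auto
    have "W (Suc s) y r0 \<bullet> p > 0" using pos_r0 s by auto
    hence "W s y r0 \<bullet> p * (1 + kk * lo s) > 0" using stepu[of s r0] z by (simp add: algebra_simps)
    thus ?thesis using z by (simp add: zero_less_mult_iff)
  qed
  have Astep: "A (Suc s) = (1 + kk * lo s)\<^sup>2 * A s" if s: "s \<in> {t0..<t1}" for s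
  proof -
    have "act (W (Suc s) y r \<bullet> p) = (1 + kk * lo s)\<^sup>2 * act (W s y r \<bullet> p)" for r
    proof (cases "W s y r \<bullet> p > 0")
      case True
      have e: "W (Suc s) y r \<bullet> p = W s y r \<bullet> p * (1 + kk * lo s)" using stepu[of s r] True by (simp add: algebra_simps)
      have "W (Suc s) y r \<bullet> p > 0" unfolding e using True fac_pos[OF s] by simp
      then show ?thesis using True act_pos e by (simp add: power_mult_distrib)
    next
      case False
      then show ?thesis using stepu[of s r] act_nonpos by simp
    qed
    thus ?thesis unfolding A_def by (simp add: sum_distrib_left)
  qed
  have gstep: "g (Suc s) = (1 + kk * lo s) * g s" if s: "s \<in> {t0..<t1}" for s
    unfolding g_def Astep[OF s] using fac_pos[OF s] by (simp add: real_sqrt_mult)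
  have gnn: "g s \<ge> 0" for s unfolding g_def using Ann by simp
  have gB: "g t0 < B"
  proof -
    define M0 where "M0 = Max ((\<lambda>r. W t0 y r \<bullet> p) ` {..<m})"
    have "W t0 y r0 \<bullet> p \<le> M0" unfolding M0_def using r0 by (intro Max_ge) auto
    hence M0pos: "M0 > 0" using r0 by simp
    have ne: "{..<m} \<noteq> {}" using r0 by auto
    have "act M0 = Max (act ` (\<lambda>r. W t0 y r \<bullet> p) ` {..<m})"
      unfolding M0_def using ne by (intro mono_Max_commute mono_act) auto
    hence am: "Max ((\<lambda>r. act (W t0 y r \<bullet> p)) ` {..<m}) = M0\<^sup>2"
      using act_pos[OF M0pos] by (simp add: image_comp o_def)
    have sumA: "(\<Sum>r<m. act (W t0 y r \<bullet> p)) = real m * A t0" unfolding A_def using mpos by simp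
    have A0: "A t0 > 0" using beta_wd Ann[of t0] sumA unfolding p_def by force
    have "beta_star m (W t0) y u * real m = M0\<^sup>2 / A t0"
      unfolding beta_star_def using am sumA mpos unfolding p_def by simp
    hence "sqrt (beta_star m (W t0) y u * real m) = M0 / g t0"
      unfolding g_def using M0pos A0 by (simp add: real_sqrt_divide)
    hence "M0 < B * (M0 / g t0)" using c2 t01 unfolding M0_def p_def by auto
    hence "M0 * g t0 < B * M0" using A0 unfolding g_def by (simp add: field_simps)
    thus ?thesis using M0pos by (simp add: mult.commute)
  qed
  have lbig: "\<bar>lo s\<bar> \<ge> \<delta>" for s
    using osc unfolding lo_def p_def q_def by (simp add: abs_minus_commute)
  have perstep: "kk * lo s - a * (g (Suc s) - g s) \<ge> kk * \<delta> * (1 - c) / 2" if s: "s \<in> {t0..<t1}" for s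
  proof -
    have s': "s \<in> {t0..t1}" using s by auto
    have eq: "kk * lo s - a * (g (Suc s) - g s) = kk * lo s * (1 - a * g s)"
      unfolding gstep[OF s] by (simp add: algebra_simps)
    have Aeq: "A s = 1 - lo s - Bv s + N s" using yn[of s] unfolding lo_def by simp
    show ?thesis
    proof (cases "lo s \<ge> 0")
      case True
      hence l: "lo s \<ge> \<delta>" using lbig[of s] by simp
      have "A s < c\<^sup>2" using Aeq l Bvnn[of s] Nsmall[OF s'] c2a by simp
      hence "g s < c" unfolding g_def c_def using delta by (metis c2a cpos real_sqrt_less_mono real_sqrt_unique less_imp_le c_def)
      hence "a * g s \<le> a * c" using apos by simp
      moreover have "1 - a * c \<ge> (1 - c) / 2"
      proof -
        have "(1 - c)^2 \<ge> 0" by simp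
        hence "0 \<le> 1 - 2*c + c*c" by (simp add: algebra_simps power2_eq_square)
        moreover have "1 - a * c - (1 - c) / 2 = (1 - 2*c + c*c)/2" unfolding a_def by (simp add: field_simps)
        moreover have "0 \<le> (1 - 2*c + c*c)/2" using calculation(1) by simp
        ultimately show ?thesis by linarith
      qed
      ultimately have f: "1 - a * g s \<ge> (1 - c)/2" by simp
      have "kk * \<delta> * ((1 - c) / 2) \<le> kk * lo s * (1 - a * g s)"
        using k1 l f cle delta by (intro mult_mono) auto
      thus ?thesis unfolding eq by simp
    next
      case False
      hence l: "lo s \<le> -\<delta>" using lbig[of s] by simp
      have "A s > 1" using Aeq l Bvsmall[OF s'] Nnn[of s] by simp
      hence "g s > 1" unfolding g_def by simp
      hence "a * g s \<ge> a * 1" using apos by (intro mult_left_mono) auto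
      moreover have "a - 1 = (1 - c)/2" unfolding a_def by (simp add: field_simps)
      ultimately have f: "a * g s - 1 \<ge> (1 - c)/2" by linarith
      have h1: "kk * \<delta> \<le> kk * (- lo s)" using k1 l by (intro mult_left_mono) auto
      have h2: "0 \<le> kk * \<delta>" using k1 delta by simp
      have "kk * \<delta> * ((1 - c) / 2) \<le> kk * (- lo s) * (a * g s - 1)"
      proof (rule mult_mono[OF h1 f])
        show "0 \<le> kk * (- lo s)" using h1 h2 by linarith
        show "0 \<le> (1 - c) / 2" using cle by simp
      qed
      thus ?thesis unfolding eq by (simp add: algebra_simps)
    qed
  qed
  have sum1: "(\<Sum>s\<in>{t0..<t1}. kk * lo s - a * (g (Suc s) - g s)) \<ge> T * (kk * \<delta> * (1 - c) / 2)"
  proof -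
    have "(\<Sum>s\<in>{t0..<t1}. kk * \<delta> * (1 - c) / 2) \<le> (\<Sum>s\<in>{t0..<t1}. kk * lo s - a * (g (Suc s) - g s))"
      using perstep by (intro sum_mono) auto
    thus ?thesis unfolding T_def by simp
  qed
  have sum2: "(\<Sum>s\<in>{t0..<t1}. kk * lo s - a * (g (Suc s) - g s)) = kk * (\<Sum>s\<in>{t0..<t1}. lo s) - a * (g t1 - g t0)"
    using sum_Suc_diff'[OF t01, of g] by (simp add: sum_subtractf sum_distrib_left[symmetric])
  have key: "(\<Sum>s\<in>{t0..<t1}. lo s) \<ge> T * (\<delta> * (1 - c) / 2) - a * B / kk"
  proof -
    have "kk * (\<Sum>s\<in>{t0..<t1}. lo s) \<ge> T * (kk * \<delta> * (1 - c) / 2) + a * (g t1 - g t0)"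
      using sum1 sum2 by simp
    moreover have "a * (g t1 - g t0) \<ge> - (a * B)"
    proof -
      have "g t1 - g t0 \<ge> - B" using gB gnn[of t1] by linarith
      hence "a * (g t1 - g t0) \<ge> a * (- B)" using apos by (intro mult_left_mono) auto
      thus ?thesis by simp
    qed
    moreover have "kk * (T * (\<delta> * (1 - c) / 2) - a * B / kk) = T * (kk * \<delta> * (1 - c) / 2) - a * B"
      using k1 by (simp add: field_simps)
    ultimately have "kk * (\<Sum>s\<in>{t0..<t1}. lo s) \<ge> kk * (T * (\<delta> * (1 - c) / 2) - a * B / kk)"
      by linarith
    thus ?thesis using k1 by simp
  qed
  have claim1: "(\<Sum>s\<in>{t0..<t1}. 1 - y * netf m (W s) (y *\<^sub>R u) (y *\<^sub>R v))
            \<ge> 2 * \<epsilon> * real (t1 - t0) - real m * B / (\<eta> * (norm u)\<^sup>2 * sqrt (1.05 - \<delta>))"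
  proof -
    have r: "real m * B / (\<eta> * (norm u)\<^sup>2 * sqrt (1.05 - \<delta>)) = 2 * B / (kk * c)"
      unfolding kk_def c_def using mpos by (simp add: field_simps)
    have "a * B / kk \<le> 2 * B / (kk * c)"
    proof -
      have "a \<le> 2 / c" using ac1 cpos by (simp add: le_divide_eq mult.commute)
      hence "a * B \<le> 2 / c * B" using B by (intro mult_right_mono) auto
      hence "a * B / kk \<le> (2 / c * B) / kk" using k1 by (intro divide_right_mono) auto
      moreover have "(2 / c * B) / kk = 2 * B / (kk * c)" by simp
      ultimately show ?thesis by (simp add: mult.commute)
    qed
    moreover have "2 * \<epsilon> * real (t1 - t0) = T * (\<delta> * (1 - c) / 2)" unfolding eps_eq T_def by simp
    moreover have "(\<Sum>s\<in>{t0..<t1}. lo s) = (\<Sum>s\<in>{t0..<t1}. 1 - y * netf m (W s) (y *\<^sub>R u) (y *\<^sub>R v))"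
      unfolding lo_def p_def q_def ..
    ultimately show ?thesis using key unfolding r by linarith
  qed
  have claim2: "W t1 y r \<bullet> (y *\<^sub>R v) \<ge> W t0 y r \<bullet> (y *\<^sub>R v) *
                 exp (\<eta> * (norm v)\<^sup>2 * \<epsilon> / real m * real (t1 - t0)
                      - (norm v)\<^sup>2 / (norm u)\<^sup>2 * (B / sqrt (1.05 - \<delta>)))"
    if r: "r < m" "W t0 y r \<bullet> (y *\<^sub>R v) > 0" for r
  proof -
    define b where "b s = W s y r \<bullet> q" for s
    define h where "h s = kv * lo s - 2 * (kv * lo s)\<^sup>2" for s
    have b0: "b t0 > 0" using r unfolding b_def q_def by simp
    have bpos: "b s > 0" if "s \<in> {t0..t1}" for s
    proof -
      have "r \<in> posset m (W t0) y v" using r unfolding posset_def by auto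
      moreover have "posset m (W s) y v = posset m (W t0) y v" using c1y[OF that] by (rule conjunct2)
      ultimately show ?thesis unfolding posset_def b_def q_def by auto
    qed
    have lb: "\<bar>lo s\<bar> \<le> 2" if "s \<in> {t0..t1}" for s
      using c5 that unfolding lo_def p_def q_def by force
    have bstep: "b (Suc s) \<ge> b s * exp (h s)" if s: "s \<in> {t0..<t1}" for s
    proof -
      have "b s > 0" using bpos s by auto
      hence e: "b (Suc s) = b s * (1 + kv * lo s)" using stepv[of s r] unfolding b_def by (simp add: algebra_simps)
      have x: "\<bar>kv * lo s\<bar> \<le> 1/2"
      proof -
        have "\<bar>kv * lo s\<bar> = kv * \<bar>lo s\<bar>" using kvpos by (simp add: abs_mult)
        also have "\<dots> \<le> (1/12500) * 2" using kvsmall lb[of s] s kvpos by (intro mult_mono) auto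
        finally show ?thesis by simp
      qed
      have "ln (1 + kv * lo s) \<ge> h s" using abs_ln_one_plus_x_minus_x_bound[OF x] unfolding h_def by linarith
      moreover have "1 + kv * lo s > 0" using x by linarith
      ultimately have "exp (h s) \<le> 1 + kv * lo s" by (metis exp_le_cancel_iff exp_ln)
      thus ?thesis unfolding e using \<open>b s > 0\<close> by simp
    qed
    have ind: "b (t0 + k) \<ge> b t0 * exp (\<Sum>s\<in>{t0..<t0+k}. h s)" if "k \<le> t1 - t0" for k
      using that
    proof (induction k)
      case 0 then show ?case by simp
    next
      case (Suc k)
      have s: "t0 + k \<in> {t0..<t1}" using Suc.prems by auto
      have "b t0 * exp (\<Sum>s\<in>{t0..<t0+Suc k}. h s) = (b t0 * exp (\<Sum>s\<in>{t0..<t0+k}. h s)) * exp (h (t0+k))"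
        by (simp add: exp_add)
      also have "\<dots> \<le> b (t0 + k) * exp (h (t0 + k))" using Suc by simp
      also have "\<dots> \<le> b (t0 + Suc k)" using bstep[OF s] by simp
      finally show ?case .
    qed
    have bt1: "b t1 \<ge> b t0 * exp (\<Sum>s\<in>{t0..<t1}. h s)" using ind[of "t1 - t0"] t01 by simp
    have hs: "(\<Sum>s\<in>{t0..<t1}. h s) \<ge> kv * (\<Sum>s\<in>{t0..<t1}. lo s) - T * (8 * kv\<^sup>2)"
    proof -
      have "h s \<ge> kv * lo s - 8 * kv\<^sup>2" if "s \<in> {t0..<t1}" for s
      proof -
        have "\<bar>lo s\<bar>\<^sup>2 \<le> 2\<^sup>2" using lb[of s] that by (intro power_mono) auto
        hence "(lo s)\<^sup>2 \<le> 2\<^sup>2" by simp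
        hence "kv\<^sup>2 * (lo s)\<^sup>2 \<le> kv\<^sup>2 * 4" by (intro mult_left_mono) auto
        thus ?thesis unfolding h_def by (simp add: power_mult_distrib)
      qed
      hence "(\<Sum>s\<in>{t0..<t1}. kv * lo s - 8 * kv\<^sup>2) \<le> (\<Sum>s\<in>{t0..<t1}. h s)" by (intro sum_mono) auto
      thus ?thesis unfolding T_def by (simp add: sum_subtractf sum_distrib_left)
    qed
    have target: "\<eta> * (norm v)\<^sup>2 * \<epsilon> / real m * real (t1 - t0) - (norm v)\<^sup>2 / (norm u)\<^sup>2 * (B / sqrt (1.05 - \<delta>))
        = kv * (T * (\<delta> * (1 - c) / 8)) - kv * (B / (kk * c))"
      unfolding kvk eps_eq T_def c_def unfolding kk_def using nu mpos etapos by (simp add: field_simps)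
    have "(\<Sum>s\<in>{t0..<t1}. h s) \<ge> kv * (T * (\<delta> * (1 - c) / 2) - a * B / kk) - T * (8 * kv\<^sup>2)"
    proof -
      have "kv * (\<Sum>s\<in>{t0..<t1}. lo s) \<ge> kv * (T * (\<delta> * (1 - c) / 2) - a * B / kk)"
        using key kvpos by (intro mult_left_mono) auto
      thus ?thesis using hs by linarith
    qed
    moreover have "kv * (T * (\<delta> * (1 - c) / 2) - a * B / kk) - T * (8 * kv\<^sup>2)
        \<ge> kv * (T * (\<delta> * (1 - c) / 8)) - kv * (B / (kk * c))"
    proof -
      have T0: "T \<ge> 0" unfolding T_def by simp
      have d1: "\<delta> * (1 - c) \<ge> 0.2 * 0.07" using delta cle by (intro mult_mono) auto
      have "8 * kv \<le> \<delta> * (1 - c) * 3 / 8" using kvsmall d1 by simp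
      hence "kv * (8 * kv) \<le> kv * (\<delta> * (1 - c) * 3 / 8)" using kvpos by (intro mult_left_mono) auto
      moreover have "8 * kv\<^sup>2 = kv * (8 * kv)" by (simp add: power2_eq_square)
      ultimately have "8 * kv\<^sup>2 \<le> kv * (\<delta> * (1 - c) * 3 / 8)" by simp
      hence "T * (8 * kv\<^sup>2) \<le> T * (kv * (\<delta> * (1 - c) * 3 / 8))" using T0 by (rule mult_left_mono)
      moreover have "a * B / kk \<le> B / (kk * c)"
      proof -
        have "a \<le> 1 / c" using ac1 cpos by (simp add: le_divide_eq mult.commute)
        hence "a * B \<le> 1 / c * B" using B by (intro mult_right_mono) auto
        hence "a * B / kk \<le> (1 / c * B) / kk" using k1 by (intro divide_right_mono) auto
        moreover have "(1 / c * B) / kk = B / (kk * c)" by simp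
        ultimately show ?thesis by (simp add: mult.commute)
      qed
      hence "kv * (a * B / kk) \<le> kv * (B / (kk * c))" by (rule mult_left_mono) (use kvpos in simp)
      moreover have "kv * (T * (\<delta> * (1 - c) / 2) - a * B / kk) - T * (8 * kv\<^sup>2) - (kv * (T * (\<delta> * (1 - c) / 8)) - kv * (B / (kk * c)))
          = (T * (kv * (\<delta> * (1 - c) * 3 / 8)) - T * (8 * kv\<^sup>2)) + (kv * (B / (kk * c)) - kv * (a * B / kk))"
        by (simp add: field_simps)
      ultimately show ?thesis by (rule lin_helper)
    qed
    ultimately have "(\<Sum>s\<in>{t0..<t1}. h s) \<ge> \<eta> * (norm v)\<^sup>2 * \<epsilon> / real m * real (t1 - t0) - (norm v)\<^sup>2 / (norm u)\<^sup>2 * (B / sqrt (1.05 - \<delta>))"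
      unfolding target by linarith
    hence "b t0 * exp (\<Sum>s\<in>{t0..<t1}. h s) \<ge> b t0 * exp (\<eta> * (norm v)\<^sup>2 * \<epsilon> / real m * real (t1 - t0) - (norm v)\<^sup>2 / (norm u)\<^sup>2 * (B / sqrt (1.05 - \<delta>)))"
      using b0 by simp
    thus ?thesis using bt1 unfolding b_def q_def by linarith
  qed
  show ?thesis using claim1 claim2 by blast
qed

end
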